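(* Fix integers $S,T,m,m_{\max}\ge1$, finite sets $\mathcal{F}\subset\mathbb{R}^S$ and $\mathcal{T}\subset\mathbb{R}^T$, and $\alpha,\beta\ge0$ with $\alpha+\beta\le1$. Then the loss $\mathrm{FNGW}_{\alpha,\beta}:\mathcal{G}_m\times\mathcal{G}\to\mathbb{R}$ admits an Implicit Loss Embedding: there exist a separable Hilbert space $\mathcal{H}$ and measurable bounded maps $\psi:\mathcal{G}_m\to\mathcal{H}$, $\varphi:\mathcal{G}\to\mathcal{H}$ such that $\mathrm{FNGW}_{\alpha,\beta}(z,y)=\langle\psi(z),\varphi(y)\rangle_{\mathcal{H}}$ for all $z\in\mathcal{G}_m$, $y\in\mathcal{G}$, and $\|\varphi(y)\|_{\mathcal{H}}\le1$ for all $y\in\mathcal{G}$.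
   Context: $\mathcal{G}$ is the set of labeled graphs $g=(F,A,E,\boldsymbol p)$ with $m_g\le m_{\max}$ nodes, $A\in\{0,1\}^{m_g\times m_g}$, $F=(F_i)_{i=1}^{m_g}\in\mathcal{F}^{m_g}$, $E=(E_{ij})\in\mathcal{T}^{m_g\times m_g}$, $\boldsymbol p=m_g^{-1}\mathbb{1}_{m_g}$ (a finite set). $\mathcal{G}_m$ is the set of $(F,A,E,\boldsymbol p)$ with $A\in[0,1]^{m\times m}$, $F\in\mathrm{Conv}(\mathcal{F})^m$, $E\in\mathrm{Conv}(\mathcal{T})^{m\times m}$, $\boldsymbol p=m^{-1}\mathbb{1}_m$, where $\mathrm{Conv}$ is the convex hull. For $g_m=(F,A,E,\boldsymbol p)\in\mathcal{G}_m$ and $g=(\tilde F,\tilde A,\tilde E,\tilde{\boldsymbol p})\in\mathcal{G}$, $$\mathrm{FNGW}_{\alpha,\beta}(g_m,g)=\min_{\pi\in\Pi(\boldsymbol p,\tilde{\boldsymbol p})}\sum_{i,j,k,l}\Big[\alpha\|E(i,k)-\tilde E(j,l)\|^2_{\mathbb{R}^T}+\beta|A(i,k)-\tilde A(j,l)|^2+(1-\alpha-\beta)\|F(i)-\tilde F(j)\|^2_{\mathbb{R}^S}\Big]\pi_{k,l}\pi_{i,j},$$ where $\Pi(\boldsymbol p,\tilde{\boldsymbol p})$ is the set of nonnegative matrices with row sums $\boldsymbol p$ and column sums $\tilde{\boldsymbol p}$. $\mathcal{G}_m$ carries the topology of $\mathbb{R}^{m\times S}\times\mathbb{R}^{m\times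 m}\times\mathbb{R}^{m\times m\times T}$ and $\mathcal{G}$ the discrete topology. *)

theory Defs
  imports "HOL-Analysis.Analysis"
begin

text \<open>Labeled graphs in the finite set G: a triple of node count n (with 1 \<le> n \<le> mmax),
  node features F, adjacency A, edge features E, indexed by naturals below n and
  set to zero outside (canonical representation). The weights p = 1/n are implicit.\<close>

type_synonym ('s, 't) lgraph =
  "nat \<times> (nat \<Rightarrow> real^'s) \<times> (nat \<Rightarrow> nat \<Rightarrow> real) \<times> (nat \<Rightarrow> nat \<Rightarrow> real^'t)"

definition graphs :: "(real^'s) set \<Rightarrow> (real^'t) set \<Rightarrow> nat \<Rightarrow> ('s, 't) lgraph set" where
  "graphs FF TT mmax = {(n, F, A, E).
      1 \<le> n \<and> n \<le> mmax \<and>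
      (\<forall>i<n. F i \<in> FF) \<and> (\<forall>i\<ge>n. F i = 0) \<and>
      (\<forall>i<n. \<forall>j<n. A i j \<in> {0, 1}) \<and> (\<forall>i j. (n \<le> i \<or> n \<le> j) \<longrightarrow> A i j = 0) \<and>
      (\<forall>i<n. \<forall>j<n. E i j \<in> TT) \<and> (\<forall>i j. (n \<le> i \<or> n \<le> j) \<longrightarrow> E i j = 0)}"

text \<open>Relaxed graphs G_m with m = CARD('m) nodes, living in the Euclidean space
  R^(m x S) x R^(m x m) x R^(m x m x T). The weights p = 1/m are implicit.\<close>

type_synonym ('s, 't, 'm) rgraph = "(real^'s^'m) \<times> (real^'m^'m) \<times> (real^'t^'m^'m)"

definition relaxed_graphs :: "(real^'s) set \<Rightarrow> (real^'t) set \<Rightarrow> ('s, 't, 'm::finite) rgraph set" where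
  "relaxed_graphs FF TT = {(F, A, E).
      (\<forall>i. F $ i \<in> convex hull FF) \<and>
      (\<forall>i k. A $ i $ k \<in> {0..1}) \<and>
      (\<forall>i k. E $ i $ k \<in> convex hull TT)}"

definition couplings :: "nat \<Rightarrow> ('m::finite \<Rightarrow> nat \<Rightarrow> real) set" where
  "couplings n = {\<pi>. (\<forall>i j. 0 \<le> \<pi> i j) \<and> (\<forall>i j. n \<le> j \<longrightarrow> \<pi> i j = 0) \<and>
      (\<forall>i. (\<Sum>j<n. \<pi> i j) = 1 / real CARD('m)) \<and>
      (\<forall>j<n. (\<Sum>i\<in>UNIV. \<pi> i j) = 1 / real n)}"

definition fngw_cost ::
  "real \<Rightarrow> real \<Rightarrow> ('s::finite, 't::finite, 'm::finite) rgraph \<Rightarrow> ('s, 't) lgraph \<Rightarrow> ('m \<Rightarrow> nat \<Rightarrow> real) \<Rightarrow> real" where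
  "fngw_cost \<alpha> \<beta> z y \<pi> = (case z of (F, A, E) \<Rightarrow> case y of (n, F', A', E') \<Rightarrow>
     (\<Sum>i\<in>UNIV. \<Sum>j<n. \<Sum>k\<in>UNIV. \<Sum>l<n.
        (\<alpha> * (norm (E $ i $ k - E' j l))\<^sup>2 + \<beta> * \<bar>A $ i $ k - A' j l\<bar>\<^sup>2
         + (1 - \<alpha> - \<beta>) * (norm (F $ i - F' j))\<^sup>2) * \<pi> k l * \<pi> i j))"

definition FNGW ::
  "real \<Rightarrow> real \<Rightarrow> ('s::finite, 't::finite, 'm::finite) rgraph \<Rightarrow> ('s, 't) lgraph \<Rightarrow> real" where
  "FNGW \<alpha> \<beta> z y = (INF \<pi>\<in>couplings (fst y). fngw_cost \<alpha> \<beta> z y \<pi>)"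

end

theory Submission
  imports Defs "HOL-Library.FuncSet"
begin

lemma fin_funs:
  assumes "finite X"
  shows "finite {f::nat\<Rightarrow>'a. (\<forall>i<n. f i \<in> X) \<and> (\<forall>i\<ge>n. f i = c)}"
proof (rule finite_subset)
  show "{f::nat\<Rightarrow>'a. (\<forall>i<n. f i \<in> X) \<and> (\<forall>i\<ge>n. f i = c)} \<subseteq>
    (\<lambda>g i. if i<n then g i else c) ` (PiE {..<n} (\<lambda>_. X))"
  proof
    fix f assume f: "f \<in> {f::nat\<Rightarrow>'a. (\<forall>i<n. f i \<in> X) \<and> (\<forall>i\<ge>n. f i = c)}"
    have "f = (\<lambda>i. if i<n then restrict f {..<n} i else c)" using f by (auto simp: fun_eq_iff)
    moreover have "restrict f {..<n} \<in> PiE {..<n} (\<lambda>_. X)" using f by auto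
    ultimately show "f \<in> (\<lambda>g i. if i<n then g i else c) ` (PiE {..<n} (\<lambda>_. X))" by blast
  qed
  show "finite ((\<lambda>g i. if i<n then g i else c) ` (PiE {..<n} (\<lambda>_. X)))"
    using assms by (intro finite_imageI finite_PiE) auto
qed

lemma graphs_finite:
  fixes FF :: "(real^'s) set" and TT :: "(real^'t) set"
  assumes "finite FF" "finite TT"
  shows "finite (graphs FF TT mmax)"
proof -
  define Fs where "Fs = {f::nat\<Rightarrow>real^'s. (\<forall>i<mmax. f i \<in> FF \<union> {0}) \<and> (\<forall>i\<ge>mmax. f i = 0)}"
  define As1 where "As1 = {f::nat\<Rightarrow>real. (\<forall>i<mmax. f i \<in> {0,1}) \<and> (\<forall>i\<ge>mmax. f i = 0)}"
  define As where "As = {f::nat\<Rightarrow>nat\<Rightarrow>real. (\<forall>i<mmax. f i \<in> As1) \<and> (\<forall>i\<ge>mmax. f i = (\<lambda>_. 0))}"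
  define Es1 where "Es1 = {f::nat\<Rightarrow>real^'t. (\<forall>i<mmax. f i \<in> TT \<union> {0}) \<and> (\<forall>i\<ge>mmax. f i = 0)}"
  define Es where "Es = {f::nat\<Rightarrow>nat\<Rightarrow>real^'t. (\<forall>i<mmax. f i \<in> Es1) \<and> (\<forall>i\<ge>mmax. f i = (\<lambda>_. 0))}"
  have "finite Fs" unfolding Fs_def using assms by (intro fin_funs) auto
  moreover have "finite As" unfolding As_def As1_def by (intro fin_funs) auto
  moreover have "finite Es" unfolding Es_def Es1_def using assms by (intro fin_funs) auto
  moreover have "graphs FF TT mmax \<subseteq> {..mmax} \<times> Fs \<times> As \<times> Es"
  proof
    fix y assume y: "y \<in> graphs FF TT mmax"
    obtain n F A E where yy: "y = (n, F, A, E)" by (cases y) auto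
    have c: "1 \<le> n" "n \<le> mmax" "\<forall>i<n. F i \<in> FF" "\<forall>i\<ge>n. F i = 0"
      "\<forall>i<n. \<forall>j<n. A i j \<in> {0, 1}" "\<forall>i j. (n \<le> i \<or> n \<le> j) \<longrightarrow> A i j = 0"
      "\<forall>i<n. \<forall>j<n. E i j \<in> TT" "\<forall>i j. (n \<le> i \<or> n \<le> j) \<longrightarrow> E i j = 0"
      using y unfolding yy graphs_def by auto
    have "F \<in> Fs" unfolding Fs_def using c by (auto simp: not_le) (metis le_trans not_le)
    moreover have "A \<in> As" unfolding As_def As1_def
    proof (intro CollectI conjI allI impI)
      fix i j assume "i < mmax" "j < mmax" thus "A i j \<in> {0,1}" using c
        by (cases "i < n \<and> j < n") (auto simp: not_less)
    next
      fix i j assume "i < mmax" "mmax \<le> j" thus "A i j = 0" using c by auto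
    next
      fix i assume "mmax \<le> i" thus "A i = (\<lambda>_. 0)" using c by auto
    qed
    moreover have "E \<in> Es" unfolding Es_def Es1_def
    proof (intro CollectI conjI allI impI)
      fix i j assume "i < mmax" "j < mmax" thus "E i j \<in> TT \<union> {0}" using c
        by (cases "i < n \<and> j < n") (auto simp: not_less)
    next
      fix i j assume "i < mmax" "mmax \<le> j" thus "E i j = 0" using c by auto
    next
      fix i assume "mmax \<le> i" thus "E i = (\<lambda>_. 0)" using c by auto
    qed
    ultimately show "y \<in> {..mmax} \<times> Fs \<times> As \<times> Es" using c yy by auto
  qed
  ultimately show ?thesis by (meson finite_SigmaI finite_atMost finite_subset)
qed
lemma cost_nonneg:
  assumes "\<pi> \<in> couplings (fst y)" "0 \<le> \<alpha>" "0 \<le> \<beta>" "\<alpha> + \<beta> \<le> 1"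
  shows "0 \<le> fngw_cost \<alpha> \<beta> (z::('s::finite, 't::finite, 'm::finite) rgraph) y \<pi>"
proof -
  obtain n F' A' E' where yy: "y = (n, F', A', E')" by (cases y) auto
  obtain F A E where zz: "z = (F, A, E)" by (cases z) auto
  have p: "\<And>i j. 0 \<le> \<pi> i j" using assms(1) unfolding couplings_def by auto
  show ?thesis unfolding fngw_cost_def yy zz using assms(2-4) p
    by (auto intro!: sum_nonneg mult_nonneg_nonneg add_nonneg_nonneg)
qed

lemma couplings_ne:
  assumes "1 \<le> n"
  shows "(\<lambda>i j. if j < n then 1 / (real CARD('m) * real n) else 0) \<in> (couplings n :: ('m::finite \<Rightarrow> nat \<Rightarrow> real) set)"
  using assms unfolding couplings_def by auto

lemma cost_cont:
  "continuous_on UNIV (\<lambda>z. fngw_cost \<alpha> \<beta> (z::('s::finite, 't::finite, 'm::finite) rgraph) y \<pi>)"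
proof -
  obtain n F' A' E' where yy: "y = (n, F', A', E')" by (cases y) auto
  have e: "(\<lambda>z. fngw_cost \<alpha> \<beta> (z::('s::finite, 't::finite, 'm::finite) rgraph) y \<pi>) =
    (\<lambda>z. \<Sum>i\<in>UNIV. \<Sum>j<n. \<Sum>k\<in>UNIV. \<Sum>l<n.
        (\<alpha> * (norm (snd (snd z) $ i $ k - E' j l))\<^sup>2 + \<beta> * \<bar>fst (snd z) $ i $ k - A' j l\<bar>\<^sup>2
         + (1 - \<alpha> - \<beta>) * (norm (fst z $ i - F' j))\<^sup>2) * \<pi> k l * \<pi> i j)"
    unfolding fngw_cost_def yy by (auto simp: fun_eq_iff split: prod.splits)
  show ?thesis unfolding e by (intro continuous_intros)
qed

lemma fngw_meas:
  assumes "1 \<le> fst y" "0 \<le> \<alpha>" "0 \<le> \<beta>" "\<alpha> + \<beta> \<le> 1"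
  shows "(\<lambda>z::('s::finite, 't::finite, 'm::finite) rgraph. FNGW \<alpha> \<beta> z y) \<in> borel_measurable borel"
  unfolding borel_measurable_iff_less
proof
  fix a
  have ne: "couplings (fst y) \<noteq> ({} :: ('m \<Rightarrow> nat \<Rightarrow> real) set)"
    using couplings_ne[OF assms(1)] by blast
  have "{w \<in> space borel. FNGW \<alpha> \<beta> (w::('s, 't, 'm) rgraph) y < a} =
     (\<Union>\<pi>\<in>couplings (fst y). {w. fngw_cost \<alpha> \<beta> w y \<pi> < a})"
  proof -
    have "FNGW \<alpha> \<beta> (w::('s, 't, 'm) rgraph) y < a \<longleftrightarrow> (\<exists>\<pi>\<in>couplings (fst y). fngw_cost \<alpha> \<beta> w y \<pi> < a)" for w
      unfolding FNGW_def
      by (rule cINF_less_iff[OF ne]) (auto intro!: bdd_belowI2 cost_nonneg assms)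
    thus ?thesis by auto
  qed
  also have "\<dots> \<in> sets borel"
    by (intro borel_open open_UN ballI open_Collect_less cost_cont continuous_on_const)
  finally show "{w \<in> space borel. FNGW \<alpha> \<beta> (w::('s, 't, 'm) rgraph) y < a} \<in> sets borel" .
qed
lemma fngw_bounds:
  fixes FF :: "(real^'s::finite) set" and TT :: "(real^'t::finite) set"
  assumes "finite FF" "finite TT" "0 \<le> \<alpha>" "0 \<le> \<beta>" "\<alpha> + \<beta> \<le> 1"
  obtains K where "\<And>z y. z \<in> (relaxed_graphs FF TT :: ('s, 't, 'm::finite) rgraph set) \<Longrightarrow>
     y \<in> graphs FF TT mmax \<Longrightarrow> 0 \<le> FNGW \<alpha> \<beta> z y \<and> FNGW \<alpha> \<beta> z y \<le> K"
proof -
  obtain bT where bT: "\<And>x. x \<in> convex hull TT \<Longrightarrow> norm x \<le> bT"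
    using bounded_convex_hull[OF finite_imp_bounded[OF assms(2)]] unfolding bounded_iff by blast
  obtain bF where bF: "\<And>x. x \<in> convex hull FF \<Longrightarrow> norm x \<le> bF"
    using bounded_convex_hull[OF finite_imp_bounded[OF assms(1)]] unfolding bounded_iff by blast
  define K where "K = (2*bT)\<^sup>2 + 1 + (2*bF)\<^sup>2"
  have "0 \<le> FNGW \<alpha> \<beta> z y \<and> FNGW \<alpha> \<beta> z y \<le> K"
    if z: "z \<in> (relaxed_graphs FF TT :: ('s, 't, 'm::finite) rgraph set)" and y: "y \<in> graphs FF TT mmax" for z y
  proof -
    obtain n F' A' E' where yy: "y = (n, F', A', E')" by (cases y) auto
    obtain F A E where zz: "z = (F, A, E)" by (cases z) auto
    have cy: "1 \<le> n" "\<forall>i<n. F' i \<in> FF"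
      "\<forall>i<n. \<forall>j<n. A' i j \<in> {0, 1}" "\<forall>i<n. \<forall>j<n. E' i j \<in> TT"
      using y unfolding yy graphs_def by auto
    have cz: "\<forall>i. F $ i \<in> convex hull FF" "\<forall>i k. A $ i $ k \<in> {0..1}" "\<forall>i k. E $ i $ k \<in> convex hull TT"
      using z unfolding zz relaxed_graphs_def by auto
    define \<pi>0 where "\<pi>0 = (\<lambda>(i::'m) j. if j < n then 1 / (real CARD('m) * real n) else 0)"
    have p0: "\<pi>0 \<in> couplings (fst y)" unfolding \<pi>0_def yy using couplings_ne[OF cy(1)] by simp
    have ne: "couplings (fst y) \<noteq> ({} :: ('m \<Rightarrow> nat \<Rightarrow> real) set)" using p0 by blast
    have bdd: "bdd_below ((\<lambda>\<pi>. fngw_cost \<alpha> \<beta> z y \<pi>) ` couplings (fst y))"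
      by (auto intro!: bdd_belowI2 cost_nonneg assms)
    have lo: "0 \<le> FNGW \<alpha> \<beta> z y" unfolding FNGW_def
      by (rule cINF_greatest[OF ne]) (auto intro!: cost_nonneg assms)
    have "FNGW \<alpha> \<beta> z y \<le> fngw_cost \<alpha> \<beta> z y \<pi>0" unfolding FNGW_def
      by (rule cINF_lower[OF bdd p0])
    also have "\<dots> \<le> (\<Sum>i\<in>(UNIV::'m set). \<Sum>j<n. \<Sum>k\<in>(UNIV::'m set). \<Sum>l<n. K * \<pi>0 k l * \<pi>0 i j)"
      unfolding fngw_cost_def yy zz prod.case
    proof (intro sum_mono mult_right_mono)
      fix i k :: 'm and j l
      assume jl: "j \<in> {..<n}" "l \<in> {..<n}"
      have h1: "(norm (E $ i $ k - E' j l))\<^sup>2 \<le> (2*bT)\<^sup>2"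
      proof (rule power_mono)
        have "norm (E $ i $ k) \<le> bT" using bT[OF cz(3)[rule_format]] .
        moreover have "norm (E' j l) \<le> bT" using bT cy(4) jl hull_subset[of TT convex] by auto
        ultimately show "norm (E $ i $ k - E' j l) \<le> 2*bT" using norm_triangle_ineq4[of "E $ i $ k" "E' j l"] by linarith
      qed simp
      have h3: "(norm (F $ i - F' j))\<^sup>2 \<le> (2*bF)\<^sup>2"
      proof (rule power_mono)
        have "norm (F $ i) \<le> bF" using bF[OF cz(1)[rule_format]] .
        moreover have "norm (F' j) \<le> bF" using bF cy(2) jl hull_subset[of FF convex] by auto
        ultimately show "norm (F $ i - F' j) \<le> 2*bF" using norm_triangle_ineq4[of "F $ i" "F' j"] by linarith
      qed simp
      have h2: "\<bar>A $ i $ k - A' j l\<bar>\<^sup>2 \<le> 1"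
      proof -
        have "\<bar>A $ i $ k - A' j l\<bar> \<le> 1" 
        proof -
          have "0 \<le> A $ i $ k" "A $ i $ k \<le> 1" using cz(2) by auto
          moreover have "A' j l = 0 \<or> A' j l = 1" using cy(3) jl by auto
          ultimately show ?thesis by (auto simp: abs_le_iff)
        qed
        hence "\<bar>A $ i $ k - A' j l\<bar>\<^sup>2 \<le> 1\<^sup>2" by (intro power_mono) auto
        thus ?thesis by simp
      qed
      have "\<alpha> * (norm (E $ i $ k - E' j l))\<^sup>2 \<le> (norm (E $ i $ k - E' j l))\<^sup>2"
        using assms(3-5) by (intro mult_left_le_one_le) auto
      moreover have "\<beta> * \<bar>A $ i $ k - A' j l\<bar>\<^sup>2 \<le> \<bar>A $ i $ k - A' j l\<bar>\<^sup>2"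
        using assms(3-5) by (intro mult_left_le_one_le) auto
      moreover have "(1 - \<alpha> - \<beta>) * (norm (F $ i - F' j))\<^sup>2 \<le> (norm (F $ i - F' j))\<^sup>2"
        using assms(3-5) by (intro mult_left_le_one_le) auto
      ultimately show "\<alpha> * (norm (E $ i $ k - E' j l))\<^sup>2 + \<beta> * \<bar>A $ i $ k - A' j l\<bar>\<^sup>2 +
          (1 - \<alpha> - \<beta>) * (norm (F $ i - F' j))\<^sup>2 \<le> K"
        using h1 h2 h3 unfolding K_def by linarith
      show "0 \<le> \<pi>0 k l" "0 \<le> \<pi>0 i j" unfolding \<pi>0_def by auto
    qed
    also have "\<dots> = (\<Sum>i\<in>(UNIV::'m set). \<Sum>j<n. \<Sum>k\<in>(UNIV::'m set). \<Sum>l<n. K * (1 / (real CARD('m) * real n)) * (1 / (real CARD('m) * real n)))"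
      by (intro sum.cong refl) (simp add: \<pi>0_def)
    also have "\<dots> = K" using cy(1) by (simp add: field_simps)
    finally show ?thesis using lo by simp
  qed
  thus ?thesis using that by blast
qed
theorem proposition3p7:
  fixes FF :: "(real^'s::finite) set" and TT :: "(real^'t::finite) set"
    and mmax :: nat and \<alpha> \<beta> :: real
  assumes "finite FF" and "finite TT" and "1 \<le> mmax"
    and "0 \<le> \<alpha>" and "0 \<le> \<beta>" and "\<alpha> + \<beta> \<le> 1"
  shows "\<exists>(N::nat) (\<psi> :: ('s, 't, 'm::finite) rgraph \<Rightarrow> nat \<Rightarrow> real) (\<phi> :: ('s, 't) lgraph \<Rightarrow> nat \<Rightarrow> real).
     (\<forall>z\<in>relaxed_graphs FF TT. \<forall>i\<ge>N. \<psi> z i = 0) \<and>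
     (\<forall>y\<in>graphs FF TT mmax. \<forall>i\<ge>N. \<phi> y i = 0) \<and>
     (\<forall>i<N. (\<lambda>z. \<psi> z i) \<in> borel_measurable (restrict_space borel (relaxed_graphs FF TT))) \<and>
     (\<forall>i<N. (\<lambda>y. \<phi> y i) \<in> borel_measurable (count_space (graphs FF TT mmax))) \<and>
     (\<exists>B. \<forall>z\<in>relaxed_graphs FF TT. sqrt (\<Sum>i<N. (\<psi> z i)\<^sup>2) \<le> B) \<and>
     (\<forall>y\<in>graphs FF TT mmax. sqrt (\<Sum>i<N. (\<phi> y i)\<^sup>2) \<le> 1) \<and>
     (\<forall>z\<in>relaxed_graphs FF TT. \<forall>y\<in>graphs FF TT mmax.
        FNGW \<alpha> \<beta> z y = (\<Sum>i<N. \<psi> z i * \<phi> y i))"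
proof -
  let ?G = "graphs FF TT mmax"
  obtain K where K: "\<And>z y. z \<in> (relaxed_graphs FF TT :: ('s, 't, 'm) rgraph set) \<Longrightarrow>
     y \<in> ?G \<Longrightarrow> 0 \<le> FNGW \<alpha> \<beta> z y \<and> FNGW \<alpha> \<beta> z y \<le> K"
    using fngw_bounds[OF assms(1,2,4,5,6)] by blast
  have fin: "finite ?G" using graphs_finite[OF assms(1,2)] .
  define N where "N = card ?G"
  obtain h where h: "bij_betw h {0..<N} ?G" using ex_bij_betw_nat_finite[OF fin] unfolding N_def by blast
  have hG: "\<And>i. i < N \<Longrightarrow> h i \<in> ?G" using h by (auto simp: bij_betw_def)
  have hinj: "\<And>i j. i < N \<Longrightarrow> j < N \<Longrightarrow> h i = h j \<Longrightarrow> i = j"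
    using h by (auto simp: bij_betw_def inj_on_def)
  have hsurj: "\<And>y. y \<in> ?G \<Longrightarrow> \<exists>i<N. h i = y"
  proof -
    fix y assume "y \<in> ?G"
    hence "y \<in> h ` {0..<N}" using h by (simp add: bij_betw_def)
    thus "\<exists>i<N. h i = y" by force
  qed
  define \<psi> where "\<psi> = (\<lambda>(z::('s, 't, 'm) rgraph) i. if i < N then FNGW \<alpha> \<beta> z (h i) else 0)"
  define \<phi> where "\<phi> = (\<lambda>(y::('s, 't) lgraph) i. if i < N \<and> h i = y then 1 else (0::real))"
  have sel: "\<And>y f. y \<in> ?G \<Longrightarrow> (\<Sum>i<N. (if h i = y then f i else (0::real))) = f (SOME i. i < N \<and> h i = y)"
  proof -
    fix y and f :: "nat \<Rightarrow> real" assume y: "y \<in> ?G"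
    obtain i0 where i0: "i0 < N" "h i0 = y" using hsurj[OF y] by blast
    have s: "(SOME i. i < N \<and> h i = y) = i0"
      using i0 hinj by (intro some_equality) auto
    have "(\<Sum>i<N. (if h i = y then f i else (0::real))) = (\<Sum>i<N. (if i = i0 then f i else 0))"
      using i0 hinj by (intro sum.cong refl) auto
    also have "\<dots> = f i0" using i0 by simp
    finally show "(\<Sum>i<N. (if h i = y then f i else (0::real))) = f (SOME i. i < N \<and> h i = y)"
      using s by simp
  qed
  show ?thesis
  proof (intro exI[of _ N] exI[of _ \<psi>] exI[of _ \<phi>] conjI ballI allI impI)
    show "\<And>z i. N \<le> i \<Longrightarrow> \<psi> z i = 0" unfolding \<psi>_def by auto
    show "\<And>y i. N \<le> i \<Longrightarrow> \<phi> y i = 0" unfolding \<phi>_def by auto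
    show "(\<lambda>z. \<psi> z i) \<in> borel_measurable (restrict_space borel (relaxed_graphs FF TT))" if i: "i < N" for i
    proof -
      have "(\<lambda>z. \<psi> z i) = (\<lambda>z. FNGW \<alpha> \<beta> z (h i))" unfolding \<psi>_def using i by auto
      moreover have "1 \<le> fst (h i)" using hG[OF i] by (cases "h i") (auto simp: graphs_def)
      ultimately show ?thesis
        using measurable_restrict_space1 fngw_meas assms(4-6) by metis
    qed
    show "(\<lambda>y. \<phi> y i) \<in> borel_measurable (count_space ?G)" for i by simp
    show "\<exists>B. \<forall>z\<in>relaxed_graphs FF TT. sqrt (\<Sum>i<N. (\<psi> z i)\<^sup>2) \<le> B"
    proof (intro exI[of _ "sqrt (real N * K\<^sup>2)"] ballI real_sqrt_le_mono)
      fix z assume z: "z \<in> (relaxed_graphs FF TT :: ('s, 't, 'm) rgraph set)"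
      have "(\<Sum>i<N. (\<psi> z i)\<^sup>2) \<le> (\<Sum>i<N. K\<^sup>2)"
      proof (intro sum_mono)
        fix i assume "i \<in> {..<N}"
        hence i: "i < N" by simp
        have "0 \<le> \<psi> z i \<and> \<psi> z i \<le> K" unfolding \<psi>_def using K[OF z hG[OF i]] i by simp
        thus "(\<psi> z i)\<^sup>2 \<le> K\<^sup>2" by (intro power_mono) auto
      qed
      thus "(\<Sum>i<N. (\<psi> z i)\<^sup>2) \<le> real N * K\<^sup>2" by simp
    qed
    show "sqrt (\<Sum>i<N. (\<phi> y i)\<^sup>2) \<le> 1" if y: "y \<in> ?G" for y
    proof -
      have "(\<Sum>i<N. (\<phi> y i)\<^sup>2) = (\<Sum>i<N. (if h i = y then (\<lambda>_. 1::real) i else 0))"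
        unfolding \<phi>_def by (intro sum.cong refl) auto
      also have "\<dots> = 1" using sel[OF y] by simp
      finally show ?thesis by simp
    qed
    show "FNGW \<alpha> \<beta> z y = (\<Sum>i<N. \<psi> z i * \<phi> y i)"
      if z: "z \<in> relaxed_graphs FF TT" and y: "y \<in> ?G" for z y
    proof -
      have "(\<Sum>i<N. \<psi> z i * \<phi> y i) = (\<Sum>i<N. (if h i = y then (\<lambda>i. FNGW \<alpha> \<beta> z y) i else 0))"
        unfolding \<psi>_def \<phi>_def by (intro sum.cong refl) auto
      also have "\<dots> = FNGW \<alpha> \<beta> z y" using sel[OF y] by simp
      finally show ?thesis by simp
    qed
  qed
qed

end
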